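(* Let $(S,\mathcal{E})$ be a qualitative evidence frame and let $\mathfrak{F}$ be a set of evidence allocation functions on $(S,\mathcal{E})$. Define $i:2^{\mathcal{E}}\to\tau_{\mathcal{E}}$ by $i(\mathbf{E})=\bigcap\mathbf{E}$ if $\mathbf{E}\neq\emptyset$ and $i(\emptyset)=S$. Then $\mathfrak{F}\cup\{i\}$ is a set of evidence allocation functions on $(S,\mathcal{E})$.
   Context: A qualitative evidence frame is a pair $(S,\mathcal{E})$ where $S$ is a finite nonempty set (of possible states) and $\mathcal{E}$ is a nonempty family of subsets of $S$ with $\emptyset\notin\mathcal{E}$ and $S\notin\mathcal{E}$. For any family $\mathbf{E}\subseteq 2^S$, $\tau_{\mathbf{E}}$ denotes the topology on $S$ generated by $\mathbf{E}$ (as a subbasis): it consists of $\emptyset$, $S$, all finite intersections of members of $\mathbf{E}$, and all arbitrary unions of such finite intersections. For $\mathbf{E}\subseteq\mathcal{E}$, an element $D\in\tau_{\mathbf{E}}$ is called dense in $\bigcup\mathbf{E}$ w.r.t. $\tau_{\mathbf{E}}$ if $D\cap T\neq\emptyset$ for every nonempty $T\in\tau_{\mathbf{E}}$. A set of evidence allocation functions on $(S,\mathcal{E})$ is a set $\mathfrak{F}$ of functions $2^{\mathcal{E}}\to\tau_{\mathcal{E}}$ such that for all $f,g\in\mathfrak{F}$: (1) $f(\emptyset)=S$; (2) for every nonempty $\mathbf{E}\subseteq\mathcal{E}$, either $f(\mathbf{E})=\emptyset$, or $f(\mathbf{E})\in\tau_{\mathbf{E}}$ and $f(\mathbf{E})$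 is dense in $\bigcup\mathbf{E}$ w.r.t. $\tau_{\mathbf{E}}$; (3) for every $\mathbf{E}\subseteq\mathcal{E}$, $f(\mathbf{E})\subseteq g(\mathbf{E})$ or $g(\mathbf{E})\subseteq f(\mathbf{E})$. *)

theory Defs
  imports Main
begin

definition qual_evidence_frame :: "'a set \<Rightarrow> 'a set set \<Rightarrow> bool" where
  "qual_evidence_frame S \<E> \<longleftrightarrow> finite S \<and> S \<noteq> {} \<and> \<E> \<noteq> {} \<and> \<E> \<subseteq> Pow S
     \<and> {} \<notin> \<E> \<and> S \<notin> \<E>"

definition fin_inters :: "'a set \<Rightarrow> 'a set set \<Rightarrow> 'a set set" where
  "fin_inters S B = insert S {\<Inter>F | F. finite F \<and> F \<noteq> {} \<and> F \<subseteq> B}"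

definition gen_top :: "'a set \<Rightarrow> 'a set set \<Rightarrow> 'a set set" where
  "gen_top S B = insert {} (insert S {\<Union>U | U. U \<subseteq> fin_inters S B})"

definition dense_wrt :: "'a set \<Rightarrow> 'a set set \<Rightarrow> 'a set \<Rightarrow> bool" where
  "dense_wrt S Es D \<longleftrightarrow> (\<forall>T\<in>gen_top S Es. T \<noteq> {} \<longrightarrow> D \<inter> T \<noteq> {})"

definition evidence_allocation_set ::
  "'a set \<Rightarrow> 'a set set \<Rightarrow> ('a set set \<Rightarrow> 'a set) set \<Rightarrow> bool" where
  "evidence_allocation_set S \<E> \<FF> \<longleftrightarrow>
     (\<forall>f\<in>\<FF>. (\<forall>Es. Es \<subseteq> \<E> \<longrightarrow> f Es \<in> gen_top S \<E>)
        \<and> f {} = S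
        \<and> (\<forall>Es. Es \<subseteq> \<E> \<longrightarrow> Es \<noteq> {} \<longrightarrow>
              f Es = {} \<or> (f Es \<in> gen_top S Es \<and> dense_wrt S Es (f Es))))
   \<and> (\<forall>f\<in>\<FF>. \<forall>g\<in>\<FF>. \<forall>Es. Es \<subseteq> \<E> \<longrightarrow> f Es \<subseteq> g Es \<or> g Es \<subseteq> f Es)"

end

theory Submission
  imports Defs
begin

lemma inter_sub_fin:
  assumes "Es \<subseteq> Pow S" "Es \<noteq> {}" "u \<in> fin_inters S Es"
  shows "\<Inter>Es \<subseteq> u"
  using assms unfolding fin_inters_def by blast

lemma inter_sub_top:
  assumes "Es \<subseteq> Pow S" "Es \<noteq> {}" "T \<in> gen_top S Es" "T \<noteq> {}"
  shows "\<Inter>Es \<subseteq> T"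
proof -
  have "T = S \<or> (\<exists>U. T = \<Union>U \<and> U \<subseteq> fin_inters S Es)"
    using assms(3,4) unfolding gen_top_def by blast
  then show ?thesis
  proof
    assume "T = S" then show ?thesis using assms(1,2) by blast
  next
    assume "\<exists>U. T = \<Union>U \<and> U \<subseteq> fin_inters S Es"
    then obtain U where U: "T = \<Union>U" "U \<subseteq> fin_inters S Es" by blast
    then obtain u where "u \<in> U" using assms(4) by blast
    then have "\<Inter>Es \<subseteq> u" using inter_sub_fin[OF assms(1,2)] U by blast
    then show ?thesis using U \<open>u \<in> U\<close> by blast
  qed
qed

lemma inter_in_top:
  assumes "finite Es" "Es \<subseteq> B" "Es \<noteq> {}"
  shows "\<Inter>Es \<in> gen_top S B"
proof -
  have "\<Inter>Es \<in> fin_inters S B" using assms unfolding fin_inters_def by blast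
  then have "\<Union>{\<Inter>Es} \<in> gen_top S B" unfolding gen_top_def by blast
  then show ?thesis by simp
qed

theorem proposition1:
  fixes S :: "'a set" and \<E> :: "'a set set" and \<FF> :: "('a set set \<Rightarrow> 'a set) set"
  assumes "qual_evidence_frame S \<E>"
    and "evidence_allocation_set S \<E> \<FF>"
  shows "evidence_allocation_set S \<E>
           (\<FF> \<union> {\<lambda>Es. if Es = {} then S else \<Inter>Es})"
proof -
  define i where "i = (\<lambda>Es::'a set set. if Es = {} then S else \<Inter>Es)"
  have fS: "finite S" and EP: "\<E> \<subseteq> Pow S" using assms(1) unfolding qual_evidence_frame_def by simp_all
  have fE: "finite \<E>" using finite_subset[OF EP] fS by simp
  have A: "\<forall>f\<in>\<FF>. (\<forall>Es. Es \<subseteq> \<E> \<longrightarrow> f Es \<in> gen_top S \<E>)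
        \<and> f {} = S
        \<and> (\<forall>Es. Es \<subseteq> \<E> \<longrightarrow> Es \<noteq> {} \<longrightarrow>
              f Es = {} \<or> (f Es \<in> gen_top S Es \<and> dense_wrt S Es (f Es)))"
   and B: "\<forall>f\<in>\<FF>. \<forall>g\<in>\<FF>. \<forall>Es. Es \<subseteq> \<E> \<longrightarrow> f Es \<subseteq> g Es \<or> g Es \<subseteq> f Es"
    using assms(2) unfolding evidence_allocation_set_def by (fact conjunct1, fact conjunct2)
  have i1: "i Es \<in> gen_top S \<E>" if "Es \<subseteq> \<E>" for Es
  proof (cases "Es = {}")
    case True then show ?thesis unfolding i_def gen_top_def by simp
  next
    case False
    have "finite Es" using that fE finite_subset by blast
    then show ?thesis using inter_in_top[of Es \<E> S] that False unfolding i_def by simp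
  qed
  have i2: "i Es = {} \<or> (i Es \<in> gen_top S Es \<and> dense_wrt S Es (i Es))"
    if "Es \<subseteq> \<E>" "Es \<noteq> {}" for Es
  proof -
    have "finite Es" using that fE finite_subset by blast
    have "Es \<subseteq> Pow S" using that EP by blast
    have "i Es \<in> gen_top S Es" using inter_in_top[of Es Es S] \<open>finite Es\<close> that unfolding i_def by simp
    moreover have "dense_wrt S Es (i Es)" if ne: "i Es \<noteq> {}"
      unfolding dense_wrt_def
    proof (intro ballI impI)
      fix T assume T: "T \<in> gen_top S Es" "T \<noteq> {}"
      have ie: "i Es = \<Inter>Es" unfolding i_def using \<open>Es \<noteq> {}\<close> by simp
      have "\<Inter>Es \<subseteq> T" using inter_sub_top[OF \<open>Es \<subseteq> Pow S\<close> \<open>Es \<noteq> {}\<close> T] .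
      then have "i Es \<inter> T = i Es" using ie by blast
      then show "i Es \<inter> T \<noteq> {}" using ne by simp
    qed
    ultimately show ?thesis by blast
  qed
  have i3: "f Es \<subseteq> i Es \<or> i Es \<subseteq> f Es" if "f \<in> \<FF>" "Es \<subseteq> \<E>" for f Es
  proof (cases "Es = {}")
    case True then show ?thesis using A that unfolding i_def by simp
  next
    case False
    have "Es \<subseteq> Pow S" using that EP by blast
    have ie: "i Es = \<Inter>Es" unfolding i_def using False by simp
    have "f Es = {} \<or> f Es \<in> gen_top S Es" using A that False by blast
    then show ?thesis
    proof
      assume "f Es = {}" then show ?thesis by simp
    next
      assume h: "f Es \<in> gen_top S Es"
      show ?thesis
      proof (cases "f Es = {}")
        case True then show ?thesis by simp
      next
        case False2: False
        have "\<Inter>Es \<subseteq> f Es" using inter_sub_top[OF \<open>Es \<subseteq> Pow S\<close> False h False2] .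
        then show ?thesis using ie by simp
      qed
    qed
  qed
  have i0: "i {} = S" unfolding i_def by simp
  have P1: "(\<forall>Es. Es \<subseteq> \<E> \<longrightarrow> f Es \<in> gen_top S \<E>)
        \<and> f {} = S
        \<and> (\<forall>Es. Es \<subseteq> \<E> \<longrightarrow> Es \<noteq> {} \<longrightarrow>
              f Es = {} \<or> (f Es \<in> gen_top S Es \<and> dense_wrt S Es (f Es)))"
    if "f \<in> \<FF> \<union> {i}" for f
  proof (cases "f = i")
    case True then show ?thesis using i0 i1 i2 by (intro conjI allI impI) simp_all
  next
    case False then have "f \<in> \<FF>" using that by blast
    then show ?thesis using A by (rule bspec[rotated])
  qed
  have P2: "f Es \<subseteq> g Es \<or> g Es \<subseteq> f Es"
    if "f \<in> \<FF> \<union> {i}" "g \<in> \<FF> \<union> {i}" "Es \<subseteq> \<E>" for f g Es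
  proof (cases "f = i")
    case True
    then show ?thesis
    proof (cases "g = i")
      case False then have "g \<in> \<FF>" using that by blast
      then show ?thesis using i3[of g Es] that True by blast
    qed simp
  next
    case False then have f: "f \<in> \<FF>" using that by blast
    show ?thesis
    proof (cases "g = i")
      case True then show ?thesis using i3[OF f that(3)] by blast
    next
      case False then have "g \<in> \<FF>" using that by blast
      then show ?thesis using B f that(3) by blast
    qed
  qed
  have "evidence_allocation_set S \<E> (\<FF> \<union> {i})"
    unfolding evidence_allocation_set_def
    apply (rule conjI)
     apply (rule ballI)
     apply (erule P1)
    apply (intro ballI allI impI)
    apply (erule (2) P2)
    done
  then show ?thesis unfolding i_def .
qed

end
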